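(* Let $G=(V,E)$ be a connected undirected graph on $n$ nodes, let $N_i$ denote the set of neighbours of node $i$, let $K>0$, and let $\bar w_1,\dots,\bar w_n\in\mathbb{R}$ satisfy $\sum_i\bar w_i=0$. Consider solutions $\vec\phi^t\in\mathbb{R}^n$, $t\ge0$, of $$\dot\phi_i=\bar w_i+\frac{K}{n}\sum_{k\in N_i}\sin(\phi_k-\phi_i),\qquad i=1,\dots,n,$$ with initial phases satisfying $\sum_{i=1}^n\phi_i^0=0$. Let $D_0=\max_i\phi_i^0-\min_i\phi_i^0$, $\mathcal{E}_0=\sum_{i=1}^n(\phi_i^0)^2$, $\sigma(\bar w)=\sqrt{\sum_{i=1}^n\bar w_i^2}$, and $L=\bigl(1+\sum_{(k,l)\in E^c}\mathrm{dist}(k,l)\bigr)^{-1}$, where $E^c$ is the set of unordered pairs of distinct nodes that are not edges of $G$ and $\mathrm{dist}(k,l)$ is the shortest-path distance in $G$. Let $D$ be a constant with $0<D_0\le D<\pi$ and suppose $\mathcal{E}_0<D^2$. For each pair of distinct oscillators $k,l$, let $m_{kl}$ be the optimal (minimal) value of $$\text{minimize }\ \sum_{i\in N_k}\sin(\phi_k-\phi_i)+\sum_{j\in N_l}\sin(\phi_j-\phi_l)\ \text{ over }\vec\phi\in\mathbb{R}^n$$ subject to $\phi_k=\phi_l+D$, $\sum_{m=1}^n\phi_m=0$, $\sum_{m=1}^n\phi_m^2\le\mathcal{E}_0$, and $\phi_l\le\phi_m\le\phi_k$ for all $m=1,\dots,n$; let $K^*_{kl}=\frac{n\,|\bar w_k-\bar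 w_l|}{m_{kl}}$ and $K^*=\max_{k,l}K^*_{kl}$. If $K\ge K^*$ and $$K\ge\frac{\sigma(\bar w)\, D}{\sqrt{\mathcal{E}_0}\,L\,\sin D},$$ then $\max_i\phi_i^t-\min_i\phi_i^t\le D$ for all $t\ge0$ (so the set $\{\vec\phi:\max_{i,j}|\phi_i-\phi_j|\le D,\ \sum_i\phi_i=0\}$ is positively invariant for this solution), and the system achieves frequency synchronization, i.e. the solution approaches the set $\{\vec\phi:\dot\phi_i=0,\ 1\le i\le n\}$.
   Context: This is the Kuramoto model in a frame rotating with the mean natural frequency: $\bar w_i=w_i-\frac1n\sum_k w_k$. Along solutions $\sum_i\phi_i^t$ is constant, hence $0$ for all $t$. Frequency synchronization means convergence of the solution to the set of equilibria of this system. *)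

theory Defs
  imports "HOL-Analysis.Analysis"
begin

text \<open>Graph on the finite vertex type 'n (n = CARD('n) nodes), given by an
adjacency relation E. Walks of length m from k to l.\<close>

definition walk :: "('n \<Rightarrow> 'n \<Rightarrow> bool) \<Rightarrow> 'n \<Rightarrow> 'n \<Rightarrow> nat \<Rightarrow> bool" where
  "walk E k l m \<longleftrightarrow> (\<exists>p :: nat \<Rightarrow> 'n. p 0 = k \<and> p m = l \<and> (\<forall>i<m. E (p i) (p (Suc i))))"

definition graph_connected :: "('n \<Rightarrow> 'n \<Rightarrow> bool) \<Rightarrow> bool" where
  "graph_connected E \<longleftrightarrow> (\<forall>k l. \<exists>m. walk E k l m)"

definition gdist :: "('n \<Rightarrow> 'n \<Rightarrow> bool) \<Rightarrow> 'n \<Rightarrow> 'n \<Rightarrow> nat" where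
  "gdist E k l = (LEAST m. walk E k l m)"

definition kuramoto_field ::
  "('n::finite \<Rightarrow> 'n \<Rightarrow> bool) \<Rightarrow> real \<Rightarrow> real^'n \<Rightarrow> real^'n \<Rightarrow> real^'n" where
  "kuramoto_field E K w x =
     (\<chi> i. w $ i + K / real CARD('n) * (\<Sum>k\<in>{k. E i k}. sin (x $ k - x $ i)))"

definition spread :: "real^'n::finite \<Rightarrow> real" where
  "spread x = Max (range (\<lambda>i. x $ i)) - Min (range (\<lambda>i. x $ i))"

definition energy :: "real^'n::finite \<Rightarrow> real" where
  "energy x = (\<Sum>i\<in>UNIV. (x $ i)^2)"

definition sigma :: "real^'n::finite \<Rightarrow> real" where
  "sigma w = sqrt (\<Sum>i\<in>UNIV. (w $ i)^2)"

text \<open>L = (1 + sum over unordered non-adjacent pairs of distinct nodes of dist)^-1.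
The sum over unordered pairs is half the sum over ordered pairs (dist is symmetric).\<close>
definition Lconst :: "('n::finite \<Rightarrow> 'n \<Rightarrow> bool) \<Rightarrow> real" where
  "Lconst E = 1 / (1 + (\<Sum>(k,l)\<in>{(k,l). k \<noteq> l \<and> \<not> E k l}. real (gdist E k l)) / 2)"

definition feasible :: "real \<Rightarrow> real \<Rightarrow> 'n::finite \<Rightarrow> 'n \<Rightarrow> (real^'n) set" where
  "feasible D E0 k l = {x. x $ k = x $ l + D \<and> (\<Sum>m\<in>UNIV. x $ m) = 0 \<and>
      (\<Sum>m\<in>UNIV. (x $ m)^2) \<le> E0 \<and> (\<forall>m. x $ l \<le> x $ m \<and> x $ m \<le> x $ k)}"

definition objective :: "('n::finite \<Rightarrow> 'n \<Rightarrow> bool) \<Rightarrow> 'n \<Rightarrow> 'n \<Rightarrow> real^'n \<Rightarrow> real" where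
  "objective E k l x = (\<Sum>i\<in>{i. E k i}. sin (x $ k - x $ i)) + (\<Sum>j\<in>{j. E l j}. sin (x $ j - x $ l))"

definition mkl :: "('n::finite \<Rightarrow> 'n \<Rightarrow> bool) \<Rightarrow> real \<Rightarrow> real \<Rightarrow> 'n \<Rightarrow> 'n \<Rightarrow> real" where
  "mkl E D E0 k l = Inf (objective E k l ` feasible D E0 k l)"

definition Kstar_kl :: "('n::finite \<Rightarrow> 'n \<Rightarrow> bool) \<Rightarrow> real^'n \<Rightarrow> real \<Rightarrow> real \<Rightarrow> 'n \<Rightarrow> 'n \<Rightarrow> real" where
  "Kstar_kl E w D E0 k l = real CARD('n) * \<bar>w $ k - w $ l\<bar> / mkl E D E0 k l"

end

theory Submission
  imports Defs
begin


lemma abs_sin_diff_le: "\<bar>sin a - sin b\<bar> \<le> \<bar>a - b::real\<bar>"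
proof -
  have "\<bar>sin a - sin b\<bar> = 2 * \<bar>sin ((a-b)/2)\<bar> * \<bar>cos ((a+b)/2)\<bar>"
    by (simp add: sin_diff_sin abs_mult)
  also have "\<dots> \<le> 2 * \<bar>sin ((a-b)/2)\<bar> * 1"
    by (intro mult_left_mono) auto
  also have "\<dots> \<le> \<bar>a - b\<bar>" using abs_sin_x_le_abs_x[of "(a-b)/2"] by simp
  finally show ?thesis .
qed

lemma xcos_le_sin: assumes "0 \<le> x" "x \<le> pi" shows "x * cos x \<le> sin x"
proof -
  have "(\<lambda>x. sin x - x * cos x) 0 \<le> (\<lambda>x. sin x - x * cos x) x"
  proof (rule DERIV_nonneg_imp_increasing_open[OF assms(1)])
    fix y assume y: "0 < y" "y < x"
    have "DERIV (\<lambda>x. sin x - x * cos x) y :> y * sin y"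
      by (auto intro!: derivative_eq_intros simp: algebra_simps)
    moreover have "y * sin y \<ge> 0" using y assms by (intro mult_nonneg_nonneg sin_ge_zero) auto
    ultimately show "\<exists>z. DERIV (\<lambda>x. sin x - x * cos x) y :> z \<and> z \<ge> 0" by blast
  next
    show "continuous_on {0..x} (\<lambda>x. sin x - x * cos x)" by (intro continuous_intros)
  qed
  then show ?thesis by simp
qed

lemma sin_ratio: assumes "0 < a" "a \<le> D" "D < pi" shows "sin D / D * a \<le> sin a"
proof -
  have "(\<lambda>x. - (sin x / x)) a \<le> (\<lambda>x. - (sin x / x)) D"
  proof (rule DERIV_nonneg_imp_increasing_open[OF assms(2)])
    fix y assume y: "a < y" "y < D"
    have "DERIV (\<lambda>x. - (sin x / x)) y :> (sin y - y * cos y) / y^2"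
      using y assms by (auto intro!: derivative_eq_intros simp: field_simps power2_eq_square)
    moreover have "(sin y - y * cos y) / y^2 \<ge> 0" using xcos_le_sin[of y] y assms by auto
    ultimately show "\<exists>z. DERIV (\<lambda>x. - (sin x / x)) y :> z \<and> z \<ge> 0" by blast
  next
    show "continuous_on {a..D} (\<lambda>x. - (sin x / x))" using assms by (intro continuous_intros) auto
  qed
  then have "sin D / D \<le> sin a / a" by simp
  then show ?thesis using assms by (simp add: field_simps)
qed

lemma xsin_bound: assumes "\<bar>a\<bar> \<le> D" "0 < D" "D < pi" shows "sin D / D * a^2 \<le> a * sin a"
proof (cases "a = 0")
  case False
  show ?thesis
  proof (cases "a > 0")
    case True
    then have "a * (sin D / D * a) \<le> a * sin a" using sin_ratio[of a D] assms by (intro mult_left_mono) auto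
    then show ?thesis by (simp add: power2_eq_square algebra_simps)
  next
    case False2: False
    then have "-a > 0" using False by auto
    then have "(-a) * (sin D / D * (-a)) \<le> (-a) * sin (-a)" using sin_ratio[of "-a" D] assms
      by (intro mult_left_mono) auto
    then show ?thesis by (simp add: power2_eq_square algebra_simps)
  qed
qed simp


locale kura =
  fixes E :: "'n::finite \<Rightarrow> 'n \<Rightarrow> bool"
    and K D :: real
    and w :: "real^'n"
    and phi :: "real \<Rightarrow> real^'n"
  assumes sym: "\<And>i j. E i j \<Longrightarrow> E j i"
    and irrefl: "\<And>i. \<not> E i i"
    and conn: "graph_connected E"
    and Kpos: "K > 0"
    and wsum: "(\<Sum>i\<in>UNIV. w $ i) = 0"
    and ode: "\<And>t. t \<ge> 0 \<Longrightarrow>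
       (phi has_vector_derivative kuramoto_field E K w (phi t)) (at t within {0..})"
    and init_sum: "(\<Sum>i\<in>UNIV. phi 0 $ i) = 0"
    and D0_pos: "0 < spread (phi 0)"
    and D0_le: "spread (phi 0) \<le> D"
    and D_lt: "D < pi"
    and E0_lt: "energy (phi 0) < D^2"
    and K_ge_Kstar: "\<And>k l. k \<noteq> l \<Longrightarrow> feasible D (energy (phi 0)) k l \<noteq> {} \<Longrightarrow>
       K \<ge> Kstar_kl E w D (energy (phi 0)) k l"
    and K_ge2: "K \<ge> sigma w * D / (sqrt (energy (phi 0)) * Lconst E * sin D)"
begin


lemma Esym: "E i k \<longleftrightarrow> E k i" using sym by blast

definition F :: "real^'n \<Rightarrow> 'n \<Rightarrow> real" where "F x i = kuramoto_field E K w x $ i"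

lemma F_eq: "F x i = w$i + K/real CARD('n) * (\<Sum>k\<in>UNIV. if E i k then sin(x$k - x$i) else 0)"
  by (simp add: F_def kuramoto_field_def sum.inter_filter[of UNIV, simplified])

lemma swapE: "(\<Sum>i\<in>UNIV. \<Sum>k\<in>UNIV. if E i k then g i k else (0::real))
            = (\<Sum>i\<in>UNIV. \<Sum>k\<in>UNIV. if E i k then g k i else 0)"
  by (subst sum.swap) (simp add: Esym)

lemma sum_sin_zero: "(\<Sum>i\<in>UNIV. \<Sum>k\<in>UNIV. if E i k then sin((x::real^'n)$k - x$i) else 0) = 0"
proof -
  let ?S = "(\<Sum>i\<in>UNIV. \<Sum>k\<in>UNIV. if E i k then sin(x$k - x$i) else 0)"
  have "?S = (\<Sum>i\<in>UNIV. \<Sum>k\<in>UNIV. if E i k then sin(x$i - x$k) else 0)"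
    using swapE[of "\<lambda>i k. sin(x$k - x$i)"] by simp
  also have "\<dots> = - ?S"
  proof -
    have m: "\<And>i k. (if E i k then sin(x$i - x$k) else 0) = - (if E i k then sin(x$k - x$i) else 0)"
    proof -
      fix i k
      have "sin(x$i - x$k) = - sin(x$k - x$i)" by (metis minus_diff_eq sin_minus)
      then show "(if E i k then sin(x$i - x$k) else 0) = - (if E i k then sin(x$k - x$i) else 0)" by simp
    qed
    show ?thesis by (simp only: m sum_negf)
  qed
  finally show ?thesis by simp
qed

lemma sum_F: "(\<Sum>i\<in>UNIV. F x i) = 0"
  by (simp add: F_eq sum.distrib wsum sum_distrib_left[symmetric] sum_divide_distrib[symmetric] sum_sin_zero)

lemma deriv_comp: "t \<ge> 0 \<Longrightarrow> ((\<lambda>t. phi t $ i) has_real_derivative F (phi t) i) (at t within {0..})"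
  using bounded_linear.has_vector_derivative[OF bounded_linear_vec_nth ode[of t], of i]
  by (simp add: F_def has_real_derivative_iff_has_vector_derivative)

lemma sum_zero: assumes "t \<ge> 0" shows "(\<Sum>i\<in>UNIV. phi t $ i) = 0"
proof -
  have "\<exists>c. \<forall>x\<in>{0..}. (\<Sum>i\<in>UNIV. phi x $ i) = (c::real)"
  proof (rule has_field_derivative_zero_constant)
    fix x :: real assume "x \<in> {0..}"
    then have "((\<lambda>t. \<Sum>i\<in>UNIV. phi t $ i) has_real_derivative (\<Sum>i\<in>UNIV. F (phi x) i)) (at x within {0..})"
      by (intro DERIV_sum deriv_comp) auto
    then show "((\<lambda>t. \<Sum>i\<in>UNIV. phi t $ i) has_real_derivative 0) (at x within {0..})"
      by (simp add: sum_F)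
  qed simp
  then obtain c where "\<forall>x\<in>{0..}. (\<Sum>i\<in>UNIV. phi x $ i) = c" by blast
  then show ?thesis using assms init_sum by force
qed

lemma F_lip: assumes "\<forall>j. \<bar>x$j - y$j\<bar> \<le> \<delta>" shows "\<bar>F x i - F y i\<bar> \<le> 2*K*\<delta>"
proof -
  have d: "\<delta> \<ge> 0" using assms[rule_format, of i] by linarith
  have "F x i - F y i = K/real CARD('n) * (\<Sum>k\<in>UNIV. if E i k then sin(x$k - x$i) - sin(y$k - y$i) else 0)"
  proof -
    have "(\<Sum>k\<in>UNIV. if E i k then sin(x$k - x$i) - sin(y$k - y$i) else 0) =
      (\<Sum>k\<in>UNIV. if E i k then sin(x$k - x$i) else 0) - (\<Sum>k\<in>UNIV. if E i k then sin(y$k - y$i) else 0)"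
      by (simp add: sum_subtractf[symmetric] if_distrib cong: if_cong)
    then have hK: "K * (\<Sum>k\<in>UNIV. if E i k then sin (x $ k - x $ i) else 0) =
     K * (\<Sum>k\<in>UNIV. if E i k then sin (y $ k - y $ i) else 0) +
     K * (\<Sum>k\<in>UNIV. if E i k then sin (x $ k - x $ i) - sin (y $ k - y $ i) else 0)"
      by (simp add: right_diff_distrib)
    then show ?thesis by (simp add: F_eq algebra_simps diff_divide_distrib[symmetric])
  qed
  then have "\<bar>F x i - F y i\<bar> = K/real CARD('n) * \<bar>\<Sum>k\<in>UNIV. if E i k then sin(x$k - x$i) - sin(y$k - y$i) else 0\<bar>"
    using Kpos by (simp add: abs_mult)
  also have "\<dots> \<le> K/real CARD('n) * (\<Sum>k\<in>(UNIV::'n set). 2*\<delta>)"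
  proof -
    have "\<bar>if E i k then sin(x$k - x$i) - sin(y$k - y$i) else 0\<bar> \<le> 2*\<delta>" for k
    proof -
    have "\<bar>sin(x$k - x$i) - sin(y$k - y$i)\<bar> \<le> \<bar>(x$k - y$k) - (x$i - y$i)\<bar>"
      using abs_sin_diff_le[of "x$k - x$i" "y$k - y$i"] by (simp add: algebra_simps)
    also have "\<dots> \<le> 2*\<delta>" using assms[rule_format, of k] assms[rule_format, of i] by linarith
    finally show ?thesis using d by auto
    qed
    then show ?thesis using Kpos by (intro mult_left_mono order.trans[OF sum_abs] sum_mono) auto
  qed
  also have "\<dots> = 2*K*\<delta>" by simp
  finally show ?thesis .
qed

definition M0 :: real where "M0 = (\<Sum>j\<in>UNIV. \<bar>w$j\<bar>) + K"

lemma F_bound: "\<bar>F x i\<bar> \<le> M0"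
proof -
  have "\<bar>F x i\<bar> \<le> \<bar>w$i\<bar> + \<bar>K/real CARD('n) * (\<Sum>k\<in>UNIV. if E i k then sin(x$k - x$i) else 0)\<bar>"
    unfolding F_eq by (rule abs_triangle_ineq)
  also have "\<bar>K/real CARD('n) * (\<Sum>k\<in>UNIV. if E i k then sin(x$k - x$i) else 0)\<bar> \<le> K/real CARD('n) * (\<Sum>k\<in>(UNIV::'n set). 1)"
  proof -
    have "\<bar>\<Sum>k\<in>UNIV. if E i k then sin(x$k - x$i) else 0\<bar> \<le> (\<Sum>k\<in>(UNIV::'n set). 1)"
      by (rule order.trans[OF sum_abs], rule sum_mono) auto
    then have "K * \<bar>\<Sum>k\<in>UNIV. if E i k then sin(x$k - x$i) else 0\<bar> \<le> K * real CARD('n)"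
      using Kpos by (intro mult_left_mono) auto
    then show ?thesis using Kpos by (simp add: abs_mult pos_divide_le_eq)
  qed
  also have "\<bar>w$i\<bar> \<le> (\<Sum>j\<in>UNIV. \<bar>w$j\<bar>)" by (rule member_le_sum) auto
  finally show ?thesis by (simp add: M0_def)
qed

end


context kura begin

lemma gdist_walk: "walk E k l (gdist E k l)" and gdist_min: "m < gdist E k l \<Longrightarrow> \<not> walk E k l m"
proof -
  obtain m where "walk E k l m" using conn unfolding graph_connected_def by blast
  then show "walk E k l (gdist E k l)" unfolding gdist_def by (rule LeastI)
next
  show "m < gdist E k l \<Longrightarrow> \<not> walk E k l m" unfolding gdist_def by (rule not_less_Least)
qed

lemma walk_shortcut:
  assumes p0: "p 0 = k" and pm: "p m = l" and st: "\<forall>i<m. E (p i) (p (Suc i))"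
    and ab: "a < b" "b \<le> m" "p a = p b"
  shows "walk E k l (m - (b - a))"
proof -
  define q where "q r = (if r \<le> a then p r else p (r + (b - a)))" for r
  have "q 0 = k" using p0 by (simp add: q_def)
  moreover have "q (m - (b - a)) = l"
  proof (cases "m - (b - a) \<le> a")
    case True
    then have "m - (b - a) = a" using ab by linarith
    moreover have "b = m" using True ab by linarith
    ultimately show ?thesis using ab pm by (simp add: q_def)
  next
    case False
    then show ?thesis using ab pm by (simp add: q_def)
  qed
  moreover have "\<forall>i<m - (b - a). E (q i) (q (Suc i))"
  proof (intro allI impI)
    fix i assume i: "i < m - (b - a)"
    consider "i < a" | "i = a" | "i > a" by linarith
    then show "E (q i) (q (Suc i))"
    proof cases
      case 1 then show ?thesis using st ab by (simp add: q_def)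
    next
      case 2
      then have "q i = p b" "q (Suc i) = p (Suc b)" using ab by (auto simp: q_def)
      moreover have "b < m" using i 2 ab by linarith
      ultimately show ?thesis using st by simp
    next
      case 3
      then have "q i = p (i + (b - a))" "q (Suc i) = p (Suc (i + (b - a)))" using ab by (auto simp: q_def)
      moreover have "i + (b - a) < m" using i ab by linarith
      ultimately show ?thesis using st by simp
    qed
  qed
  ultimately show ?thesis unfolding walk_def by blast
qed

lemma shortest_walk:
  obtains p where "p 0 = k" "p (gdist E k l) = l" "\<forall>i<gdist E k l. E (p i) (p (Suc i))"
    "inj_on p {0..gdist E k l}"
proof -
  let ?m = "gdist E k l"
  obtain p where p: "p 0 = k" "p ?m = l" "\<forall>i<?m. E (p i) (p (Suc i))"
    using gdist_walk[of k l] unfolding walk_def by blast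
  have "inj_on p {0..?m}"
  proof (rule inj_onI, rule ccontr)
    fix a b assume "a \<in> {0..?m}" "b \<in> {0..?m}" "p a = p b" "a \<noteq> b"
    then have "walk E k l (?m - (max a b - min a b))"
      using walk_shortcut[OF p, of "min a b" "max a b"] by (auto simp: min_def max_def)
    moreover have "?m - (max a b - min a b) < ?m" using \<open>a \<noteq> b\<close> \<open>a \<in> _\<close> \<open>b \<in> _\<close> by auto
    ultimately show False using gdist_min by blast
  qed
  then show ?thesis using p that by blast
qed

definition Q :: "real^'n \<Rightarrow> real" where
  "Q y = (\<Sum>i\<in>UNIV. \<Sum>k\<in>UNIV. if E i k then (y$i - y$k)^2 else 0)"

lemma Q_pairs: "Q y = (\<Sum>z\<in>UNIV. (\<lambda>(i,k). if E i k then (y$i - y$k)^2 else 0) z)"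
  unfolding Q_def sum.cartesian_product UNIV_Times_UNIV by simp

lemma path_bound: "(y$k - y$l)^2 \<le> real (gdist E k l) * Q y / 2"
proof -
  let ?m = "gdist E k l"
  obtain p where p: "p 0 = k" "p ?m = l" "\<forall>i<?m. E (p i) (p (Suc i))" "inj_on p {0..?m}"
    by (rule shortest_walk)
  define a where "a r = y$(p r) - y$(p (Suc r))" for r
  have "y$k - y$l = (\<Sum>r<?m. a r)"
    unfolding a_def using sum_lessThan_telescope'[of "\<lambda>r. y$(p r)" ?m] p by simp
  then have "(y$k - y$l)^2 \<le> (\<Sum>r<?m. (a r)^2) * real ?m"
    using sum_squared_le_sum_of_squares[of a "{..<?m}"] by simp
  also have "(\<Sum>r<?m. (a r)^2) \<le> Q y / 2"
  proof -
    let ?g = "\<lambda>(i,k). if E i k then (y$i - y$k)^2 else (0::real)"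
    define S1 where "S1 = (\<lambda>r. (p r, p (Suc r))) ` {..<?m}"
    define S2 where "S2 = (\<lambda>r. (p (Suc r), p r)) ` {..<?m}"
    have inj1: "inj_on (\<lambda>r. (p r, p (Suc r))) {..<?m}"
      using p(4) by (auto simp: inj_on_def)
    have inj2: "inj_on (\<lambda>r. (p (Suc r), p r)) {..<?m}"
      using p(4) by (auto simp: inj_on_def)
    have disj: "S1 \<inter> S2 = {}"
    proof -
      { fix r r' assume r: "r < ?m" "r' < ?m" "p r = p (Suc r')" "p (Suc r) = p r'"
        then have "r = Suc r'" "Suc r = r'" using p(4) by (auto simp: inj_on_def)
        then have False by simp }
      then show ?thesis unfolding S1_def S2_def by auto
    qed
    have s1: "sum ?g S1 = (\<Sum>r<?m. (a r)^2)"
      unfolding S1_def using inj1 p(3) by (simp add: sum.reindex a_def)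
    have s2: "sum ?g S2 = (\<Sum>r<?m. (a r)^2)"
      unfolding S2_def using inj2 p(3) sym by (simp add: sum.reindex a_def power2_commute)
    have "sum ?g (S1 \<union> S2) \<le> sum ?g UNIV"
      by (rule sum_mono2) auto
    then have "2 * (\<Sum>r<?m. (a r)^2) \<le> Q y"
      using sum.union_disjoint[of S1 S2 ?g] disj s1 s2 unfolding Q_pairs by (simp add: S1_def S2_def)
    then show ?thesis by simp
  qed
  then have "(\<Sum>r<?m. (a r)^2) * real ?m \<le> Q y / 2 * real ?m" by (rule mult_right_mono) simp
  finally show ?thesis by (simp add: mult.commute)
qed

lemma sum_sq_diff: assumes "(\<Sum>i\<in>UNIV. y$i) = 0"
  shows "(\<Sum>z\<in>UNIV. (\<lambda>(i,j). (y$i - y$j)^2) z) = 2 * real CARD('n) * energy (y::real^'n)"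
proof -
  have "(\<Sum>z\<in>UNIV. (\<lambda>(i,j). (y$i - y$j)^2) z) = (\<Sum>i\<in>UNIV. \<Sum>j\<in>UNIV. (y$i - y$j)^2)"
    unfolding sum.cartesian_product UNIV_Times_UNIV by simp
  also have "\<dots> = (\<Sum>i\<in>UNIV. \<Sum>j\<in>UNIV. (y$i)^2 + (y$j)^2 - 2 * y$i * y$j)"
    by (simp add: power2_diff algebra_simps)
  also have "\<dots> = 2 * real CARD('n) * energy y - 2 * (\<Sum>i\<in>UNIV. y$i) * (\<Sum>j\<in>UNIV. y$j)"
    by (simp add: energy_def sum.distrib sum_subtractf sum_distrib_left sum_distrib_right algebra_simps)
  finally show ?thesis using assms by simp
qed

lemma lap_bound: assumes "(\<Sum>i\<in>UNIV. y$i) = 0"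
  shows "2 * real CARD('n) * Lconst E * energy y \<le> Q y"
proof -
  define NE where "NE = {(k,l). k \<noteq> l \<and> \<not> E k l}"
  define S where "S = (\<Sum>(k,l)\<in>NE. real (gdist E k l))"
  let ?h = "\<lambda>(i,j). (y$i - y$j)^2"
  let ?g = "\<lambda>(i,j). if E i j then (y$i - y$j)^2 else (0::real)"
  have S0: "S \<ge> 0" unfolding S_def by (auto intro: sum_nonneg)
  have hsplit: "?h z = ?g z + (if z \<in> NE then ?h z else 0)" for z
    by (cases z) (auto simp: NE_def)
  have "(\<Sum>z\<in>UNIV. ?h z) = (\<Sum>z\<in>UNIV. ?g z) + (\<Sum>z\<in>NE. ?h z)"
    by (subst hsplit) (simp add: sum.distrib sum.inter_filter[symmetric])
  also have "(\<Sum>z\<in>NE. ?h z) \<le> (\<Sum>z\<in>NE. (\<lambda>(k,l). real (gdist E k l) * Q y / 2) z)"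
    using path_bound[of y] by (intro sum_mono) (auto simp: mult.commute)
  also have "\<dots> = S * Q y / 2"
    unfolding S_def by (simp add: sum_distrib_right sum_divide_distrib case_prod_unfold)
  finally have "2 * real CARD('n) * energy y \<le> Q y * (1 + S/2)"
    using sum_sq_diff[OF assms] Q_pairs[of y] by (simp add: algebra_simps)
  then have "2 * real CARD('n) * energy y / (1 + S/2) \<le> Q y"
    using S0 by (simp add: divide_le_eq)
  then show ?thesis unfolding Lconst_def S_def[symmetric] NE_def[symmetric] by simp
qed

end


context kura begin

definition E0 :: real where "E0 = energy (phi 0)"

lemma energy_nonneg: "energy x \<ge> 0" unfolding energy_def by (auto intro: sum_nonneg)

lemma E0_pos: "E0 > 0"
proof (rule ccontr)
  assume "\<not> E0 > 0"
  then have "energy (phi 0) = 0" using energy_nonneg[of "phi 0"] unfolding E0_def by linarith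
  then have "\<forall>i. (phi 0 $ i)^2 = 0" unfolding energy_def
    by (subst (asm) sum_nonneg_eq_0_iff) auto
  then have "range (\<lambda>i. phi 0 $ i) = {0}" by auto
  then have "spread (phi 0) = 0" unfolding spread_def by simp
  then show False using D0_pos by simp
qed

lemma D_pos: "D > 0" using D0_pos D0_le by linarith

lemma sinD_pos: "sin D > 0" using D_pos D_lt by (intro sin_gt_zero) auto

lemma L_pos: "Lconst E > 0"
proof -
  have "(\<Sum>(k,l)\<in>{(k,l). k \<noteq> l \<and> \<not> E k l}. real (gdist E k l)) \<ge> 0"
    by (auto intro: sum_nonneg)
  then show ?thesis unfolding Lconst_def by (simp add: add_pos_nonneg)
qed

lemma E0_lt': "E0 < D^2" using E0_lt unfolding E0_def .

lemma dissip:
  assumes sy: "(\<Sum>i\<in>UNIV. y$i) = 0" and ey: "energy y = E0" and dy: "\<forall>a b. \<bar>y$a - y$b\<bar> \<le> D"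
  shows "(\<Sum>i\<in>UNIV. y$i * F y i) \<le> 0"
proof -
  define T where "T = (\<Sum>i\<in>UNIV. \<Sum>k\<in>UNIV. if E i k then y$i * sin(y$k - y$i) else 0)"
  define U where "U = (\<Sum>i\<in>UNIV. \<Sum>k\<in>UNIV. if E i k then (y$i - y$k) * sin(y$i - y$k) else 0)"
  have split: "(\<Sum>i\<in>UNIV. y$i * F y i) = (\<Sum>i\<in>UNIV. y$i * w$i) + K/real CARD('n) * T"
    unfolding F_eq T_def by (simp add: algebra_simps sum.distrib sum_distrib_left sum_divide_distrib if_distrib cong: if_cong)
  have "(\<Sum>i\<in>UNIV. y$i * w$i) \<le> (\<Sum>i\<in>UNIV. \<bar>y$i\<bar> * \<bar>w$i\<bar>)"
    by (rule sum_mono) (simp add: abs_mult[symmetric])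
  also have "\<dots> \<le> L2_set (\<lambda>i. y$i) UNIV * L2_set (\<lambda>i. w$i) UNIV" by (rule L2_set_mult_ineq)
  also have "\<dots> = sqrt E0 * sigma w" unfolding L2_set_def sigma_def using ey by (simp add: energy_def)
  finally have yw: "(\<Sum>i\<in>UNIV. y$i * w$i) \<le> sqrt E0 * sigma w" .
  have T1: "T = (\<Sum>i\<in>UNIV. \<Sum>k\<in>UNIV. if E i k then y$k * sin(y$i - y$k) else 0)"
    unfolding T_def using swapE[of "\<lambda>i k. y$i * sin(y$k - y$i)"] by simp
  have "2 * T = - U"
  proof -
    have "2 * T = T + (\<Sum>i\<in>UNIV. \<Sum>k\<in>UNIV. if E i k then y$k * sin(y$i - y$k) else 0)"
      using T1 by simp
    also have "\<dots> = (\<Sum>i\<in>UNIV. \<Sum>k\<in>UNIV. if E i k then y$i * sin(y$k - y$i) + y$k * sin(y$i - y$k) else 0)"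
      unfolding T_def by (simp add: sum.distrib[symmetric] if_distrib cong: if_cong)
    also have "\<dots> = - U"
    proof -
      have "\<And>i k. y$i * sin(y$k - y$i) + y$k * sin(y$i - y$k) = - ((y$i - y$k) * sin(y$i - y$k))"
      proof -
        fix i k
        have "sin(y$k - y$i) = - sin(y$i - y$k)" by (metis minus_diff_eq sin_minus)
        then show "y$i * sin(y$k - y$i) + y$k * sin(y$i - y$k) = - ((y$i - y$k) * sin(y$i - y$k))"
          by (simp add: algebra_simps)
      qed
      then show ?thesis unfolding U_def by (simp add: sum_negf[symmetric] if_distrib cong: if_cong)
    qed
    finally show ?thesis .
  qed
  have "sin D / D * Q y \<le> U"
    unfolding Q_def U_def sum_distrib_left
    using dy D_pos D_lt xsin_bound[of _ D] by (intro sum_mono) auto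
  moreover have "2 * real CARD('n) * Lconst E * E0 \<le> Q y" using lap_bound[OF sy] ey by simp
  ultimately have "sin D / D * (2 * real CARD('n) * Lconst E * E0) \<le> U"
    using sinD_pos D_pos by (meson divide_nonneg_pos less_imp_le mult_left_mono order_trans)
  then have "T \<le> - (real CARD('n) * (Lconst E * sin D * E0 / D))"
    using \<open>2 * T = - U\<close> by (simp add: field_simps)
  then have "K * T \<le> K * (- (real CARD('n) * (Lconst E * sin D * E0 / D)))"
    using Kpos by (intro mult_left_mono) auto
  then have TT: "K/real CARD('n) * T \<le> - (K * Lconst E * sin D * E0 / D)"
    by (simp add: field_simps)
  have "sigma w * D / (sqrt E0 * Lconst E * sin D) \<le> K" using K_ge2 unfolding E0_def .
  then have "sigma w * D \<le> K * (sqrt E0 * Lconst E * sin D)"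
    using E0_pos L_pos sinD_pos by (simp add: divide_le_eq)
  then have "sigma w * D * sqrt E0 \<le> K * (sqrt E0 * Lconst E * sin D) * sqrt E0"
    using E0_pos by (intro mult_right_mono) auto
  then have "sigma w * D * sqrt E0 \<le> K * Lconst E * sin D * E0"
    using E0_pos by (simp add: algebra_simps)
  then have "sqrt E0 * sigma w \<le> K * Lconst E * sin D * E0 / D"
    using D_pos by (simp add: le_divide_eq algebra_simps)
  then show ?thesis using split yw TT by linarith
qed

end


context kura begin

lemma neighbor: assumes "k \<noteq> l" obtains a where "E k a"
proof -
  obtain p where p: "p 0 = k" "p (gdist E k l) = l" "\<forall>i<gdist E k l. E (p i) (p (Suc i))"
    using gdist_walk[of k l] unfolding walk_def by blast
  have "gdist E k l > 0" using p(1,2) assms by (cases "gdist E k l") auto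
  then have "E k (p 1)" using p(1,3) by auto
  then show ?thesis using that by blast
qed

lemma comp_le_sqrt: "energy (x::real^'n) \<le> c \<Longrightarrow> \<bar>x$i\<bar> \<le> sqrt c"
proof -
  assume "energy x \<le> c"
  moreover have "(x$i)^2 \<le> energy x" unfolding energy_def by (rule member_le_sum) auto
  ultimately have "(x$i)^2 \<le> c" by linarith
  then show ?thesis using real_sqrt_le_mono[of "(x$i)^2" c] by simp
qed

lemma feasible_compact: "compact (feasible D c (k::'n) l)"
proof (subst compact_eq_bounded_closed, intro conjI)
  show "bounded (feasible D c k l)" unfolding bounded_iff
  proof (intro exI ballI)
    fix x assume "x \<in> feasible D c k l"
    then have "energy x \<le> c" unfolding feasible_def energy_def by auto
    then have "(\<Sum>i\<in>UNIV. \<bar>x$i\<bar>) \<le> (\<Sum>i\<in>(UNIV::'n set). sqrt c)"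
      using comp_le_sqrt by (intro sum_mono) auto
    then have "norm x \<le> (\<Sum>i\<in>(UNIV::'n set). sqrt c)"
      using norm_le_l1_cart[of x] by linarith
    then show "norm x \<le> real CARD('n) * sqrt c" by simp
  qed
  have "feasible D c k l = {x. x $ k = x $ l + D} \<inter> {x. (\<Sum>m\<in>UNIV. x $ m) = 0} \<inter>
      {x. (\<Sum>m\<in>UNIV. (x $ m)^2) \<le> c} \<inter> (\<Inter>m. {x. x $ l \<le> x $ m}) \<inter> (\<Inter>m. {x. x $ m \<le> x $ k})"
    unfolding feasible_def by auto
  moreover have "closed \<dots>"
    by (intro closed_Int closed_INT ballI closed_Collect_eq closed_Collect_le continuous_intros)
  ultimately show "closed (feasible D c k l)" by simp
qed

lemma objective_cont: "continuous_on S (objective E k l)"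
  unfolding objective_def by (intro continuous_intros)

lemma objective_pos:
  assumes kl: "k \<noteq> l" and y: "y \<in> feasible D E0 k l"
  shows "objective E k l y > 0"
proof -
  have yk: "y$k = y$l + D" and ey: "energy y \<le> E0" and rng: "\<And>m. y$l \<le> y$m \<and> y$m \<le> y$k"
    using y unfolding feasible_def energy_def by auto
  have t1: "\<And>i. sin (y$k - y$i) \<ge> 0" using rng yk D_lt by (intro sin_ge_zero) (auto, smt (verit))
  have t2: "\<And>j. sin (y$j - y$l) \<ge> 0" using rng yk D_lt by (intro sin_ge_zero) (auto, smt (verit))
  have s1: "(\<Sum>i\<in>{i. E k i}. sin (y$k - y$i)) \<ge> 0" using t1 by (intro sum_nonneg) auto
  have s2: "(\<Sum>j\<in>{j. E l j}. sin (y$j - y$l)) \<ge> 0" using t2 by (intro sum_nonneg) auto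
  show ?thesis
  proof (rule ccontr)
    assume "\<not> ?thesis"
    then have z1: "(\<Sum>i\<in>{i. E k i}. sin (y$k - y$i)) = 0" and z2: "(\<Sum>j\<in>{j. E l j}. sin (y$j - y$l)) = 0"
      using s1 s2 unfolding objective_def by auto
    obtain a where a: "E k a" using neighbor[OF kl] by blast
    obtain b where b: "E l b" using neighbor[of l k] kl by blast
    have "sin (y$k - y$a) = 0" using z1 t1 a by (subst (asm) sum_nonneg_eq_0_iff) auto
    moreover have "0 \<le> y$k - y$a" "y$k - y$a < pi" using rng[of a] yk D_lt by auto
    ultimately have ya: "y$a = y$k" using sin_gt_zero[of "y$k - y$a"] by force
    have "sin (y$b - y$l) = 0" using z2 t2 b by (subst (asm) sum_nonneg_eq_0_iff) auto
    moreover have "0 \<le> y$b - y$l" "y$b - y$l < pi" using rng[of b] yk D_lt by auto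
    ultimately have yb: "y$b = y$l" using sin_gt_zero[of "y$b - y$l"] by force
    have dist: "a \<noteq> k" "b \<noteq> l" "a \<noteq> l" "b \<noteq> k" "a \<noteq> b"
      using a b irrefl ya yb yk D_pos by auto
    have "(\<Sum>m\<in>{k,a,l,b}. (y$m)^2) \<le> energy y"
      unfolding energy_def by (rule sum_mono2) auto
    moreover have "(\<Sum>m\<in>{k,a,l,b}. (y$m)^2) = 2 * (y$k)^2 + 2 * (y$l)^2"
      using dist kl ya yb by simp
    moreover have "2 * (y$k)^2 + 2 * (y$l)^2 \<ge> D^2"
    proof -
      have "2 * (y$k)^2 + 2 * (y$l)^2 - D^2 = (y$k + y$l)^2" using yk by (simp add: power2_eq_square algebra_simps)
      then show ?thesis by (smt (verit) zero_le_power2)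
    qed
    ultimately show False using ey E0_lt' by linarith
  qed
qed

lemma mkl_props:
  assumes kl: "k \<noteq> l" and ne: "feasible D E0 k l \<noteq> {}"
  shows "mkl E D E0 k l > 0" "\<And>y. y \<in> feasible D E0 k l \<Longrightarrow> mkl E D E0 k l \<le> objective E k l y"
proof -
  obtain y0 where y0: "y0 \<in> feasible D E0 k l" "\<forall>y\<in>feasible D E0 k l. objective E k l y0 \<le> objective E k l y"
    using continuous_attains_inf[OF feasible_compact ne objective_cont] by blast
  have eq: "mkl E D E0 k l = objective E k l y0"
    unfolding mkl_def using y0 by (intro cInf_eq_minimum) auto
  show "mkl E D E0 k l > 0" using eq objective_pos[OF kl y0(1)] by simp
  show "\<And>y. y \<in> feasible D E0 k l \<Longrightarrow> mkl E D E0 k l \<le> objective E k l y" using eq y0 by simp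
qed

end


context kura begin

definition piece :: "real^'n \<Rightarrow> ('n \<times> 'n) option \<Rightarrow> real" where
  "piece x p = (case p of None \<Rightarrow> energy x / E0 | Some (k,l) \<Rightarrow> (x$k - x$l)^2 / D^2)"

definition pd :: "real^'n \<Rightarrow> ('n \<times> 'n) option \<Rightarrow> real" where
  "pd x p = (case p of None \<Rightarrow> (\<Sum>i\<in>UNIV. 2 * x$i * F x i) / E0
     | Some (k,l) \<Rightarrow> 2 * (x$k - x$l) * (F x k - F x l) / D^2)"

lemma piece_deriv:
  assumes "t \<ge> 0"
  shows "((\<lambda>t. piece (phi t) p) has_real_derivative pd (phi t) p) (at t within {0..})"
proof (cases p)
  case None
  have "((\<lambda>t. (\<Sum>i\<in>UNIV. (phi t $ i)^2) / E0) has_real_derivative (\<Sum>i\<in>UNIV. 2 * phi t $ i * F (phi t) i) / E0) (at t within {0..})"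
    using deriv_comp[OF assms] E0_pos by (auto intro!: derivative_eq_intros DERIV_sum simp: mult_ac)
  then show ?thesis using None by (simp add: piece_def pd_def energy_def)
next
  case (Some z)
  obtain k l where z: "z = (k,l)" by fastforce
  have "((\<lambda>t. (phi t $ k - phi t $ l)^2 / D^2) has_real_derivative 2 * (phi t $ k - phi t $ l) * (F (phi t) k - F (phi t) l) / D^2) (at t within {0..})"
  proof -
    have "((\<lambda>t. (phi t $ k - phi t $ l)^2) has_real_derivative 2 * (phi t $ k - phi t $ l) * (F (phi t) k - F (phi t) l)) (at t within {0..})"
      using deriv_comp[OF assms] by (auto intro!: derivative_eq_intros simp: mult_ac)
    then show ?thesis by (rule DERIV_cdivide)
  qed
  then show ?thesis using Some z by (simp add: piece_def pd_def)
qed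

definition Cc :: real where "Cc = 8 * K * sqrt E0 / D + 4 * real CARD('n) * K"

lemma Cc_pos: "Cc > 0" unfolding Cc_def using Kpos D_pos E0_pos by (auto intro!: add_nonneg_pos)

lemma scale_facts:
  assumes sx: "(\<Sum>i\<in>UNIV. x$i) = 0" and v: "v > 1" and all: "\<forall>q. piece x q \<le> v"
  defines "y \<equiv> (\<chi> i. x$i / sqrt v)"
  shows "(\<Sum>i\<in>UNIV. y$i) = 0" "energy y = energy x / v" "energy y \<le> E0"
    "\<forall>a b. \<bar>y$a - y$b\<bar> \<le> D" "\<forall>i. \<bar>F x i - F y i\<bar> \<le> 2*K*((sqrt v - 1) * sqrt E0)"
    "\<forall>i. x$i = sqrt v * y$i" "\<forall>i. \<bar>y$i\<bar> \<le> sqrt E0"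
proof -
  have c1: "sqrt v > 1" using v by simp
  have cc: "sqrt v * sqrt v = v" using v by simp
  show xy: "\<forall>i. x$i = sqrt v * y$i" unfolding y_def using c1 by simp
  show "(\<Sum>i\<in>UNIV. y$i) = 0" unfolding y_def using sx by (simp add: sum_divide_distrib[symmetric])
  show ey: "energy y = energy x / v" unfolding y_def energy_def
    using v by (simp add: power_divide sum_divide_distrib[symmetric])
  have "energy x / E0 \<le> v" using all[rule_format, of None] by (simp add: piece_def)
  then have "energy x \<le> v * E0" using E0_pos by (simp add: divide_le_eq)
  then show ey0: "energy y \<le> E0" using ey v by (simp add: divide_le_eq mult.commute)
  show "\<forall>a b. \<bar>y$a - y$b\<bar> \<le> D"
  proof (intro allI)
    fix a b
    have "(x$a - x$b)^2 / D^2 \<le> v" using all[rule_format, of "Some (a,b)"] by (simp add: piece_def)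
    then have "(x$a - x$b)^2 \<le> v * D^2" using D_pos by (simp add: divide_le_eq)
    moreover have "x$a - x$b = sqrt v * (y$a - y$b)" using xy by (simp add: algebra_simps)
    then have "(x$a - x$b)^2 = (sqrt v)^2 * (y$a - y$b)^2" by (simp add: power_mult_distrib)
    then have "(x$a - x$b)^2 = v * (y$a - y$b)^2" using v by simp
    ultimately have "(y$a - y$b)^2 \<le> D^2" using v by simp
    then show "\<bar>y$a - y$b\<bar> \<le> D" using D_pos by (simp add: abs_le_square_iff[symmetric])
  qed
  show yb: "\<forall>i. \<bar>y$i\<bar> \<le> sqrt E0" using comp_le_sqrt[OF ey0] by blast
  show "\<forall>i. \<bar>F x i - F y i\<bar> \<le> 2*K*((sqrt v - 1) * sqrt E0)"
  proof (intro allI F_lip allI)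
    fix j
    have "x$j - y$j = (sqrt v - 1) * y$j" using xy by (simp add: algebra_simps)
    then have "\<bar>x$j - y$j\<bar> = (sqrt v - 1) * \<bar>y$j\<bar>" using c1 by (simp add: abs_mult)
    also have "\<dots> \<le> (sqrt v - 1) * sqrt E0" using yb c1 by (intro mult_left_mono) auto
    finally show "\<bar>x$j - y$j\<bar> \<le> (sqrt v - 1) * sqrt E0" .
  qed
qed

lemma F_diff_obj: "F y k - F y l = w$k - w$l - K/real CARD('n) * objective E k l y"
proof -
  have "(\<Sum>i\<in>{i. E k i}. sin (y$i - y$k)) = - (\<Sum>i\<in>{i. E k i}. sin (y$k - y$i))"
  proof -
    have "\<And>i. sin (y$i - y$k) = - sin (y$k - y$i)" by (metis minus_diff_eq sin_minus)
    then show ?thesis by (simp add: sum_negf)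
  qed
  then show ?thesis unfolding F_def kuramoto_field_def objective_def by (simp add: algebra_simps)
qed

lemma key_pair:
  assumes sx: "(\<Sum>i\<in>UNIV. x$i) = 0" and v: "v > 1" and all: "\<forall>q. piece x q \<le> v"
    and act: "piece x (Some (k,l)) = v" and ord: "x$l \<le> x$k"
  shows "pd x (Some (k,l)) \<le> Cc * (v - 1)"
proof -
  define y where "y = (\<chi> i. x$i / sqrt v)"
  note sf = scale_facts[OF sx v all, folded y_def]
  define c where "c = sqrt v"
  have c1: "c > 1" using v by (simp add: c_def)
  have cv: "c * c = v" using v by (simp add: c_def)
  define \<delta> where "\<delta> = 2*K*((c - 1) * sqrt E0)"
  have Fd: "\<And>i. \<bar>F x i - F y i\<bar> \<le> \<delta>" using sf(5) by (simp add: \<delta>_def c_def)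
  have "(x$k - x$l)^2 = v * D^2" using act D_pos by (simp add: piece_def divide_eq_eq)
  then have "sqrt ((x$k - x$l)^2) = sqrt v * sqrt (D^2)" by (simp add: real_sqrt_mult)
  then have xkl: "x$k - x$l = c * D" using ord D_pos by (simp add: c_def)
  have "c * (y$k - y$l) = c * D" using xkl sf(6) by (simp add: c_def right_diff_distrib)
  then have ykl: "y$k - y$l = D" using c1 by simp
  have kl: "k \<noteq> l" using ykl D_pos by auto
  have yf: "y \<in> feasible D E0 k l"
  proof -
    have "\<forall>m. y$l \<le> y$m \<and> y$m \<le> y$k"
    proof
      fix m
      have "\<bar>y$k - y$m\<bar> \<le> D" "\<bar>y$m - y$l\<bar> \<le> D" using sf(4) by auto
      then show "y$l \<le> y$m \<and> y$m \<le> y$k" using ykl by linarith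
    qed
    then show ?thesis unfolding feasible_def using ykl sf(1,3) unfolding energy_def by auto
  qed
  have mpos: "mkl E D E0 k l > 0" and mle: "mkl E D E0 k l \<le> objective E k l y"
    using mkl_props[OF kl] yf by blast+
  have "K \<ge> Kstar_kl E w D E0 k l" using K_ge_Kstar[OF kl] yf unfolding E0_def by blast
  then have "real CARD('n) * \<bar>w$k - w$l\<bar> \<le> K * mkl E D E0 k l"
    unfolding Kstar_kl_def using mpos by (simp add: divide_le_eq)
  also have "\<dots> \<le> K * objective E k l y" using mle Kpos by (intro mult_left_mono) auto
  finally have "\<bar>w$k - w$l\<bar> \<le> K / real CARD('n) * objective E k l y"
    by (simp add: field_simps)
  then have Fy: "F y k - F y l \<le> 0" using F_diff_obj[of y k l] by linarith
  have "F x k - F x l \<le> 2 * \<delta>" using Fd[of k] Fd[of l] Fy by linarith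
  have "pd x (Some (k,l)) = 2 * c * (F x k - F x l) / D"
    unfolding pd_def using xkl D_pos by (simp add: power2_eq_square field_simps)
  also have "\<dots> \<le> 2 * c * (2 * \<delta>) / D"
    using \<open>F x k - F x l \<le> 2 * \<delta>\<close> c1 D_pos by (intro divide_right_mono mult_left_mono) auto
  also have "\<dots> = 8 * K * sqrt E0 * (c * c - c) / D" by (simp add: \<delta>_def algebra_simps)
  also have "\<dots> \<le> 8 * K * sqrt E0 * (v - 1) / D"
    using cv c1 Kpos D_pos E0_pos by (intro divide_right_mono mult_left_mono) auto
  also have "\<dots> \<le> Cc * (v - 1)"
  proof -
    have "0 \<le> 4 * real CARD('n) * K * (v - 1)" using Kpos v by simp
    then show ?thesis unfolding Cc_def by (simp add: algebra_simps)
  qed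
  finally show ?thesis .
qed

lemma key_energy:
  assumes sx: "(\<Sum>i\<in>UNIV. x$i) = 0" and v: "v > 1" and all: "\<forall>q. piece x q \<le> v"
    and act: "piece x None = v"
  shows "pd x None \<le> Cc * (v - 1)"
proof -
  define y where "y = (\<chi> i. x$i / sqrt v)"
  note sf = scale_facts[OF sx v all, folded y_def]
  define c where "c = sqrt v"
  have c1: "c > 1" using v by (simp add: c_def)
  have cv: "c * c = v" using v by (simp add: c_def)
  define \<delta> where "\<delta> = 2*K*((c - 1) * sqrt E0)"
  have d0: "\<delta> \<ge> 0" using c1 Kpos E0_pos unfolding \<delta>_def by (intro mult_nonneg_nonneg) auto
  have Fd: "\<And>i. \<bar>F x i - F y i\<bar> \<le> \<delta>" using sf(5) by (simp add: \<delta>_def c_def)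
  have "energy x = v * E0" using act E0_pos by (simp add: piece_def divide_eq_eq)
  then have ey: "energy y = E0" using sf(2) v by simp
  have dis: "(\<Sum>i\<in>UNIV. y$i * F y i) \<le> 0" by (rule dissip[OF sf(1) ey sf(4)])
  have "(\<Sum>i\<in>UNIV. y$i * F x i) = (\<Sum>i\<in>UNIV. y$i * F y i) + (\<Sum>i\<in>UNIV. y$i * (F x i - F y i))"
    by (simp add: sum.distrib[symmetric] algebra_simps)
  also have "(\<Sum>i\<in>UNIV. y$i * (F x i - F y i)) \<le> (\<Sum>i\<in>(UNIV::'n set). sqrt E0 * \<delta>)"
  proof (rule sum_mono)
    fix i
    have "y$i * (F x i - F y i) \<le> \<bar>y$i\<bar> * \<bar>F x i - F y i\<bar>" by (simp add: abs_mult[symmetric])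
    also have "\<dots> \<le> sqrt E0 * \<delta>" using sf(7) Fd[of i] E0_pos by (intro mult_mono) auto
    finally show "y$i * (F x i - F y i) \<le> sqrt E0 * \<delta>" .
  qed
  finally have "(\<Sum>i\<in>UNIV. y$i * F x i) \<le> real CARD('n) * sqrt E0 * \<delta>" using dis by simp
  moreover have "(\<Sum>i\<in>UNIV. 2 * x$i * F x i) = 2 * c * (\<Sum>i\<in>UNIV. y$i * F x i)"
    using sf(6) by (simp add: c_def sum_distrib_left algebra_simps)
  ultimately have "(\<Sum>i\<in>UNIV. 2 * x$i * F x i) \<le> 2 * c * (real CARD('n) * sqrt E0 * \<delta>)"
    using c1 by (simp add: mult_left_mono)
  then have "pd x None \<le> 2 * c * (real CARD('n) * sqrt E0 * \<delta>) / E0"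
    unfolding pd_def using E0_pos by (simp add: divide_right_mono)
  also have "\<dots> = 4 * real CARD('n) * K * (c * c - c)"
  proof -
    define s where "s = sqrt E0"
    have sE: "s * s = E0" using E0_pos by (simp add: s_def)
    have "2 * c * (real CARD('n) * s * (2*K*((c - 1) * s))) = 4 * real CARD('n) * K * (c * c - c) * (s * s)"
      by (simp add: algebra_simps)
    then have eq: "2 * c * (real CARD('n) * sqrt E0 * \<delta>) = 4 * real CARD('n) * K * (c * c - c) * E0"
      unfolding \<delta>_def s_def[symmetric] sE .
    show ?thesis unfolding eq using E0_pos by simp
  qed
  also have "\<dots> \<le> 4 * real CARD('n) * K * (v - 1)"
    using cv c1 Kpos by (intro mult_left_mono) auto
  also have "\<dots> \<le> Cc * (v - 1)"
  proof -
    have "0 \<le> 8 * K * sqrt E0 / D * (v - 1)" using Kpos v D_pos E0_pos by simp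
    then show ?thesis unfolding Cc_def by (simp add: algebra_simps)
  qed
  finally show ?thesis .
qed

lemma key_bound:
  assumes sx: "(\<Sum>i\<in>UNIV. x$i) = 0" and v: "v > 1" and all: "\<forall>q. piece x q \<le> v"
    and act: "piece x p = v"
  shows "pd x p \<le> Cc * (v - 1)"
proof (cases p)
  case None then show ?thesis using key_energy[OF sx v all] act by simp
next
  case (Some z)
  obtain k l where z: "z = (k,l)" by fastforce
  show ?thesis
  proof (cases "x$l \<le> x$k")
    case True then show ?thesis using key_pair[OF sx v all, of k l] act Some z by simp
  next
    case False
    have "piece x (Some (l,k)) = v" using act Some z by (simp add: piece_def power2_commute)
    moreover have "pd x (Some (l,k)) = pd x (Some (k,l))" by (simp add: pd_def algebra_simps)
    ultimately show ?thesis using key_pair[OF sx v all, of l k] False Some z by simp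
  qed
qed

end


context kura begin

lemma abs_le_spread: "\<bar>x$k - x$l\<bar> \<le> spread (x::real^'n)"
proof -
  have "x$k \<le> Max (range (\<lambda>i. x$i))" "x$l \<le> Max (range (\<lambda>i. x$i))"
    "Min (range (\<lambda>i. x$i)) \<le> x$k" "Min (range (\<lambda>i. x$i)) \<le> x$l" by auto
  then show ?thesis unfolding spread_def by linarith
qed

lemma pieces_init: "piece (phi 0) q \<le> 1"
proof (cases q)
  case None then show ?thesis using E0_pos by (simp add: piece_def E0_def)
next
  case (Some z)
  obtain k l where z: "z = (k,l)" by fastforce
  have "\<bar>phi 0 $ k - phi 0 $ l\<bar> \<le> D" using abs_le_spread D0_le order_trans by blast
  then have "(phi 0 $ k - phi 0 $ l)^2 \<le> D^2" using D_pos by (simp add: abs_le_square_iff[symmetric])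
  then show ?thesis using Some z D_pos by (simp add: piece_def)
qed

lemma piece_cont: "continuous_on {0..} (\<lambda>t. piece (phi t) q)"
  by (rule DERIV_continuous_on) (use piece_deriv in auto)

lemma invariant: assumes T: "T \<ge> 0" shows "piece (phi T) q0 \<le> 1"
proof (rule ccontr)
  assume "\<not> ?thesis"
  then have a: "piece (phi T) q0 - 1 > 0" by simp
  define \<epsilon> where "\<epsilon> = (piece (phi T) q0 - 1) / (2 * exp (2 * Cc * T))"
  have eps: "\<epsilon> > 0" using a by (simp add: \<epsilon>_def)
  define z where "z t = \<epsilon> * exp (2 * Cc * t)" for t
  define h where "h q t = piece (phi t) q - 1 - z t" for q t
  have zpos: "z t > 0" for t using eps by (simp add: z_def)
  have hcont: "continuous_on {0..} (h q)" for q
    unfolding h_def z_def by (intro continuous_intros piece_cont)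
  have hder: "((h q) has_real_derivative (pd (phi t) q - \<epsilon> * (exp (2 * Cc * t) * (2 * Cc)))) (at t within {0..})"
    if "t \<ge> 0" for q t
    unfolding h_def z_def using piece_deriv[OF that]
    by (auto intro!: derivative_eq_intros)
  define A where "A = (\<Union>q. {0..T} \<inter> h q -` {0..})"
  have "A = {}"
  proof (rule ccontr)
    assume Ane: "A \<noteq> {}"
    have clA: "closed A" unfolding A_def
      by (intro closed_UN ballI continuous_closed_preimage) (auto intro: continuous_on_subset[OF hcont])
    have bA: "bdd_below A" unfolding A_def by (auto intro!: bdd_belowI[of _ 0])
    define s where "s = Inf A"
    have sA: "s \<in> A" unfolding s_def using closed_contains_Inf[OF Ane bA clA] .
    then obtain q where q: "h q s \<ge> 0" and s0: "0 \<le> s" "s \<le> T" unfolding A_def by auto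
    have before: "h q' t < 0" if "0 \<le> t" "t < s" for q' t
    proof (rule ccontr)
      assume "\<not> h q' t < 0"
      then have "t \<in> {0..T} \<inter> h q' -` {0..}" using that s0 by auto
      then have "t \<in> A" unfolding A_def by blast
      then have "s \<le> t" unfolding s_def using bA by (rule cInf_lower)
      then show False using that by simp
    qed
    have init: "h q' 0 < 0" for q' using pieces_init[of q'] zpos[of 0] by (simp add: h_def)
    have spos: "s > 0" using q init[of q] s0 by (cases "s = 0") auto
    have hle: "h q' s \<le> 0" for q'
    proof (rule ccontr)
      assume "\<not> h q' s \<le> 0"
      then have hp: "h q' s > 0" by simp
      have c: "\<forall>x\<in>{0..}. \<forall>e>0. \<exists>d>0. \<forall>x'\<in>{0..}. dist x' x < d \<longrightarrow> dist (h q' x') (h q' x) < e"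
        using hcont[of q'] by (simp only: continuous_on_iff)
      obtain d where d: "d > 0" "\<forall>t\<in>{0..}. dist t s < d \<longrightarrow> dist (h q' t) (h q' s) < h q' s"
        using c[rule_format, of s "h q' s"] s0 hp by auto
      define t where "t = s - min s d / 2"
      have "0 \<le> t" "t < s" "dist t s < d" using spos d by (auto simp: t_def dist_real_def)
      then have "h q' t < 0" "dist (h q' t) (h q' s) < h q' s" using before d by auto
      then show False by (simp add: dist_real_def)
    qed
    then have hq0: "h q s = 0" using q by (simp add: order_antisym)
    define v where "v = 1 + z s"
    have v1: "v > 1" using zpos by (simp add: v_def)
    have allv: "\<forall>q'. piece (phi s) q' \<le> v" using hle by (simp add: h_def v_def algebra_simps)
    have act: "piece (phi s) q = v" using hq0 by (simp add: h_def v_def)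
    have kb: "pd (phi s) q \<le> Cc * (v - 1)" using key_bound[OF sum_zero[OF s0(1)] v1 allv act] .
    have "pd (phi s) q - \<epsilon> * (exp (2 * Cc * s) * (2 * Cc)) \<ge> 0"
    proof (rule ccontr)
      assume "\<not> ?thesis"
      then have neg: "pd (phi s) q - \<epsilon> * (exp (2 * Cc * s) * (2 * Cc)) < 0" by simp
      obtain d where d: "d > 0" "\<forall>\<eta>>0. s - \<eta> \<in> {0..} \<longrightarrow> \<eta> < d \<longrightarrow> h q s < h q (s - \<eta>)"
        using has_real_derivative_neg_dec_left[OF hder[OF s0(1)] neg] by blast
      define \<eta> where "\<eta> = min s d / 2"
      have "\<eta> > 0" "s - \<eta> \<in> {0..}" "\<eta> < d" "s - \<eta> < s" using spos d by (auto simp: \<eta>_def)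
      then have "h q s < h q (s - \<eta>)" "h q (s - \<eta>) < 0" using d before by auto
      then show False using hq0 by simp
    qed
    then have "2 * Cc * z s \<le> Cc * z s" using kb by (simp add: z_def v_def algebra_simps)
    then show False using Cc_pos zpos[of s] by (simp add: mult_le_cancel_right)
  qed
  have "h q0 T < 0"
  proof (rule ccontr)
    assume "\<not> h q0 T < 0"
    then have "T \<in> {0..T} \<inter> h q0 -` {0..}" using T by auto
    then have "T \<in> A" unfolding A_def by blast
    then show False using \<open>A = {}\<close> by simp
  qed
  then have "piece (phi T) q0 - 1 < \<epsilon> * exp (2 * Cc * T)" by (simp add: h_def z_def)
  also have "\<dots> = (piece (phi T) q0 - 1) / 2" by (simp add: \<epsilon>_def)
  finally show False using a by simp
qed

lemma spread_le: assumes "t \<ge> 0" shows "spread (phi t) \<le> D"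
proof -
  let ?x = "phi t"
  have "Max (range (\<lambda>i. ?x$i)) \<in> range (\<lambda>i. ?x$i)" by (rule Max_in) auto
  then obtain a where a: "Max (range (\<lambda>i. ?x$i)) = ?x$a" by blast
  have "Min (range (\<lambda>i. ?x$i)) \<in> range (\<lambda>i. ?x$i)" by (rule Min_in) auto
  then obtain b where b: "Min (range (\<lambda>i. ?x$i)) = ?x$b" by blast
  have "(?x$a - ?x$b)^2 / D^2 \<le> 1" using invariant[OF assms, of "Some (a,b)"] by (simp add: piece_def)
  then have "(?x$a - ?x$b)^2 \<le> D^2" using D_pos by simp
  then have "\<bar>?x$a - ?x$b\<bar> \<le> D" using D_pos by (simp add: abs_le_square_iff[symmetric])
  then show ?thesis unfolding spread_def a b by simp
qed

end


context kura begin

lemma bnd: "t \<ge> 0 \<Longrightarrow> \<bar>phi t $ i\<bar> \<le> sqrt E0"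
proof -
  assume "t \<ge> 0"
  then have "energy (phi t) / E0 \<le> 1" using invariant[of t None] by (simp add: piece_def)
  then have "energy (phi t) \<le> E0" using E0_pos by simp
  then show ?thesis by (rule comp_le_sqrt)
qed

lemma at_pos: "t > 0 \<Longrightarrow> at t within {0..} = at (t::real)"
proof -
  assume "t > 0"
  have "interior {0::real<..} \<subseteq> interior {0::real..}" by (rule interior_mono) auto
  then have "t \<in> interior {0::real..}" using \<open>t > 0\<close> interior_open[of "{0::real<..}"] by auto
  then show ?thesis by (rule at_within_interior)
qed

lemma deriv_at: "t > 0 \<Longrightarrow> ((\<lambda>t. phi t $ i) has_real_derivative F (phi t) i) (at t)"
  using deriv_comp[of t i] at_pos[of t] by simp

definition P :: "real^'n \<Rightarrow> real" where
  "P x = (\<Sum>i\<in>UNIV. w$i * x$i) + K / (2 * real CARD('n)) *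
     (\<Sum>i\<in>UNIV. \<Sum>k\<in>UNIV. if E i k then cos (x$k - x$i) else 0)"

definition G :: "real^'n \<Rightarrow> real" where "G x = (\<Sum>i\<in>UNIV. (F x i)^2)"

lemma G_identity:
  "(\<Sum>i\<in>UNIV. w$i * F x i) + K / (2 * real CARD('n)) *
     (\<Sum>i\<in>UNIV. \<Sum>k\<in>UNIV. if E i k then - sin (x$k - x$i) * (F x k - F x i) else 0) = G x"
proof -
  define T where "T = (\<Sum>i\<in>UNIV. \<Sum>k\<in>UNIV. if E i k then sin (x$k - x$i) * F x i else 0)"
  have T2: "(\<Sum>i\<in>UNIV. \<Sum>k\<in>UNIV. if E i k then sin (x$k - x$i) * F x k else 0) = - T"
  proof -
    have "(\<Sum>i\<in>UNIV. \<Sum>k\<in>UNIV. if E i k then sin (x$k - x$i) * F x k else 0)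
        = (\<Sum>i\<in>UNIV. \<Sum>k\<in>UNIV. if E i k then sin (x$i - x$k) * F x i else 0)"
      using swapE[of "\<lambda>i k. sin (x$k - x$i) * F x k"] by simp
    also have "\<dots> = (\<Sum>i\<in>UNIV. \<Sum>k\<in>UNIV. - (if E i k then sin (x$k - x$i) * F x i else 0))"
    proof -
      have s: "sin (x$i - x$k) = - sin (x$k - x$i)" for i k by (metis minus_diff_eq sin_minus)
      have "(if E i k then sin (x$i - x$k) * F x i else 0) = - (if E i k then sin (x$k - x$i) * F x i else 0)" for i k
        using s[of i k] by simp
      then show ?thesis by simp
    qed
    finally show ?thesis unfolding T_def by (simp add: sum_negf)
  qed
  have "(\<Sum>i\<in>UNIV. \<Sum>k\<in>UNIV. if E i k then - sin (x$k - x$i) * (F x k - F x i) else 0)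
     = T - (\<Sum>i\<in>UNIV. \<Sum>k\<in>UNIV. if E i k then sin (x$k - x$i) * F x k else 0)"
    unfolding T_def by (simp add: sum_subtractf[symmetric] algebra_simps if_distrib cong: if_cong)
  then have eq1: "(\<Sum>i\<in>UNIV. \<Sum>k\<in>UNIV. if E i k then - sin (x$k - x$i) * (F x k - F x i) else 0) = 2 * T"
    using T2 by simp
  have "G x = (\<Sum>i\<in>UNIV. F x i * (w$i + K/real CARD('n) * (\<Sum>k\<in>UNIV. if E i k then sin(x$k - x$i) else 0)))"
    unfolding G_def by (intro sum.cong refl) (metis F_eq power2_eq_square)
  also have "\<dots> = (\<Sum>i\<in>UNIV. w$i * F x i) + K/real CARD('n) * T"
    unfolding T_def by (simp add: algebra_simps sum.distrib sum_distrib_left sum_divide_distrib if_distrib cong: if_cong)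
  finally show ?thesis using eq1 by simp
qed

lemma P_deriv: assumes "t \<ge> 0"
  shows "((\<lambda>t. P (phi t)) has_real_derivative G (phi t)) (at t within {0..})"
proof -
  let ?x = "phi t"
  have d1: "((\<lambda>t. \<Sum>i\<in>UNIV. w$i * phi t $ i) has_real_derivative (\<Sum>i\<in>UNIV. w$i * F ?x i)) (at t within {0..})"
    by (intro DERIV_sum DERIV_cmult deriv_comp assms)
  have d2: "((\<lambda>t. if E i k then cos (phi t $ k - phi t $ i) else 0) has_real_derivative
      (if E i k then - sin (?x$k - ?x$i) * (F ?x k - F ?x i) else 0)) (at t within {0..})" for i k
  proof (cases "E i k")
    case True
    then show ?thesis using deriv_comp[OF assms]
      by (auto intro!: derivative_eq_intros)
  qed simp
  have "((\<lambda>t. P (phi t)) has_real_derivative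
     (\<Sum>i\<in>UNIV. w$i * F ?x i) + K / (2 * real CARD('n)) *
     (\<Sum>i\<in>UNIV. \<Sum>k\<in>UNIV. if E i k then - sin (?x$k - ?x$i) * (F ?x k - F ?x i) else 0)) (at t within {0..})"
    unfolding P_def by (intro DERIV_add d1 DERIV_cmult DERIV_sum d2)
  then show ?thesis using G_identity by simp
qed

lemma P_deriv_at: "t > 0 \<Longrightarrow> ((\<lambda>t. P (phi t)) has_real_derivative G (phi t)) (at t)"
  using P_deriv[of t] at_pos[of t] by simp

lemma G_nonneg: "G x \<ge> 0" unfolding G_def by (auto intro: sum_nonneg)

definition Pmax :: real where "Pmax = (\<Sum>i\<in>UNIV. \<bar>w$i\<bar>) * sqrt E0 + K / (2 * real CARD('n)) * (real CARD('n) * real CARD('n))"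

lemma P_bound: assumes "t \<ge> 0" shows "P (phi t) \<le> Pmax"
proof -
  have "(\<Sum>i\<in>UNIV. w$i * phi t $ i) \<le> (\<Sum>i\<in>UNIV. \<bar>w$i\<bar> * sqrt E0)"
  proof (rule sum_mono)
    fix i
    have "w$i * phi t $ i \<le> \<bar>w$i\<bar> * \<bar>phi t $ i\<bar>" by (simp add: abs_mult[symmetric])
    also have "\<dots> \<le> \<bar>w$i\<bar> * sqrt E0" using bnd[OF assms] by (intro mult_left_mono) auto
    finally show "w$i * phi t $ i \<le> \<bar>w$i\<bar> * sqrt E0" .
  qed
  moreover have "(\<Sum>i\<in>UNIV. \<Sum>k\<in>UNIV. if E i k then cos (phi t$k - phi t$i) else 0) \<le> (\<Sum>i\<in>(UNIV::'n set). \<Sum>k\<in>(UNIV::'n set). 1)"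
    by (intro sum_mono) auto
  then have "K / (2 * real CARD('n)) * (\<Sum>i\<in>UNIV. \<Sum>k\<in>UNIV. if E i k then cos (phi t$k - phi t$i) else 0)
     \<le> K / (2 * real CARD('n)) * (real CARD('n) * real CARD('n))"
    using Kpos by (intro mult_left_mono) auto
  ultimately show ?thesis unfolding P_def Pmax_def
    by (simp add: sum_distrib_right[symmetric])
qed

lemma M0_pos: "M0 > 0" unfolding M0_def using Kpos by (simp add: add_nonneg_pos sum_nonneg)

lemma phi_lip: assumes "0 < a" "a \<le> b" shows "\<bar>phi b $ j - phi a $ j\<bar> \<le> M0 * (b - a)"
proof (cases "a = b")
  case False
  then have "a < b" using assms by simp
  then obtain z where z: "a < z" "z < b" "phi b $ j - phi a $ j = (b - a) * F (phi z) j"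
    using MVT2[of a b "\<lambda>t. phi t $ j" "\<lambda>t. F (phi t) j"] deriv_at assms by force
  have "\<bar>(b - a) * F (phi z) j\<bar> \<le> (b - a) * M0"
    using F_bound[of "phi z" j] \<open>a < b\<close> by (simp add: abs_mult mult_left_mono)
  then show ?thesis using z by (simp add: mult.commute)
qed simp

lemma G_lip: assumes "\<forall>j. \<bar>x$j - y$j\<bar> \<le> \<delta>" shows "\<bar>G x - G y\<bar> \<le> real CARD('n) * (4 * K * M0 * \<delta>)"
proof -
  have "G x - G y = (\<Sum>i\<in>UNIV. (F x i - F y i) * (F x i + F y i))"
    unfolding G_def by (simp add: sum_subtractf[symmetric] power2_eq_square algebra_simps)
  also have "\<bar>\<dots>\<bar> \<le> (\<Sum>i\<in>(UNIV::'n set). 4 * K * M0 * \<delta>)"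
  proof (rule order.trans[OF sum_abs], rule sum_mono)
    fix i
    have a1: "\<bar>F x i - F y i\<bar> \<le> 2*K*\<delta>" by (rule F_lip[OF assms])
    have a2: "\<bar>F x i + F y i\<bar> \<le> 2 * M0" using F_bound[of x i] F_bound[of y i] by linarith
    have "\<bar>(F x i - F y i) * (F x i + F y i)\<bar> = \<bar>F x i - F y i\<bar> * \<bar>F x i + F y i\<bar>" by (simp add: abs_mult)
    also have "\<dots> \<le> (2*K*\<delta>) * (2 * M0)" using a1 a2 by (intro mult_mono) auto
    finally show "\<bar>(F x i - F y i) * (F x i + F y i)\<bar> \<le> 4 * K * M0 * \<delta>" by (simp add: mult_ac)
  qed
  finally show ?thesis by simp
qed

definition Lg :: real where "Lg = real CARD('n) * (4 * K * M0 * M0)"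

lemma Lg_pos: "Lg > 0" unfolding Lg_def using Kpos M0_pos by simp

lemma G_traj: assumes "0 < a" "a \<le> b" shows "\<bar>G (phi b) - G (phi a)\<bar> \<le> Lg * (b - a)"
proof -
  have "\<bar>G (phi b) - G (phi a)\<bar> \<le> real CARD('n) * (4 * K * M0 * (M0 * (b - a)))"
    using phi_lip[OF assms] by (intro G_lip) auto
  then show ?thesis unfolding Lg_def by (simp add: algebra_simps)
qed

lemma P_mono: assumes "0 < a" "a \<le> b" shows "P (phi a) \<le> P (phi b)"
proof (cases "a = b")
  case False
  then have "a < b" using assms by simp
  then obtain z where z: "a < z" "z < b" "P (phi b) - P (phi a) = (b - a) * G (phi z)"
    using MVT2[of a b "\<lambda>t. P (phi t)" "\<lambda>t. G (phi t)"] P_deriv_at assms by force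
  moreover have "(b - a) * G (phi z) \<ge> 0" using G_nonneg[of "phi z"] \<open>a < b\<close> by simp
  ultimately show ?thesis by linarith
qed simp

lemma P_step: assumes t: "t > 0" and d: "\<delta> > 0" and c: "G (phi t) \<ge> c" and Ld: "Lg * \<delta> \<le> c / 2"
  shows "P (phi (t + \<delta>)) \<ge> P (phi t) + \<delta> * (c / 2)"
proof -
  obtain z where z: "t < z" "z < t + \<delta>" "P (phi (t + \<delta>)) - P (phi t) = (t + \<delta> - t) * G (phi z)"
    using MVT2[of t "t + \<delta>" "\<lambda>t. P (phi t)" "\<lambda>t. G (phi t)"] P_deriv_at t d by force
  have "\<bar>G (phi z) - G (phi t)\<bar> \<le> Lg * (z - t)" using G_traj[of t z] t z by simp
  also have "\<dots> \<le> Lg * \<delta>" using z Lg_pos by (intro mult_left_mono) auto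
  finally have "G (phi z) \<ge> c / 2" using c Ld by linarith
  then have "\<delta> * G (phi z) \<ge> \<delta> * (c / 2)" using d by (intro mult_left_mono) auto
  moreover have "P (phi (t + \<delta>)) - P (phi t) = \<delta> * G (phi z)" using z by simp
  ultimately show ?thesis by linarith
qed

end


context kura begin

lemma G_cont: "continuous_on S G"
  unfolding G_def F_def kuramoto_field_def vec_lambda_beta by (intro continuous_intros)

lemma conv: assumes eps: "\<epsilon> > 0"
  shows "eventually (\<lambda>t. \<exists>y. kuramoto_field E K w y = 0 \<and> dist (phi t) y < \<epsilon>) at_top"
proof (rule ccontr)
  assume neg: "\<not> ?thesis"
  have freq: "\<exists>t\<ge>T. \<forall>y. kuramoto_field E K w y = 0 \<longrightarrow> \<epsilon> \<le> dist (phi t) y" for T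
  proof -
    from neg have "\<not> (\<forall>n\<ge>T. \<exists>y. kuramoto_field E K w y = 0 \<and> dist (phi n) y < \<epsilon>)"
      unfolding eventually_at_top_linorder by blast
    then obtain t where "t \<ge> T" "\<not> (\<exists>y. kuramoto_field E K w y = 0 \<and> dist (phi t) y < \<epsilon>)" by blast
    then show ?thesis by (auto simp: not_less)
  qed
  define B where "B = {x. (\<forall>i. \<bar>x$i\<bar> \<le> sqrt E0) \<and> (\<forall>y. kuramoto_field E K w y = 0 \<longrightarrow> \<epsilon> \<le> dist x y)}"
  have inB: "phi t \<in> B" if "t \<ge> 0" "\<forall>y. kuramoto_field E K w y = 0 \<longrightarrow> \<epsilon> \<le> dist (phi t) y" for t
    using that bnd unfolding B_def by auto
  have cB: "compact B"
  proof (subst compact_eq_bounded_closed, intro conjI)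
    show "bounded B" unfolding bounded_iff
    proof (intro exI ballI)
      fix x assume "x \<in> B"
      then have "(\<Sum>i\<in>UNIV. \<bar>x$i\<bar>) \<le> (\<Sum>i\<in>(UNIV::'n set). sqrt E0)"
        unfolding B_def by (intro sum_mono) auto
      then show "norm x \<le> real CARD('n) * sqrt E0" using norm_le_l1_cart[of x] by simp
    qed
    have "B = (\<Inter>i. {x. \<bar>x$i\<bar> \<le> sqrt E0}) \<inter> (\<Inter>y\<in>{y. kuramoto_field E K w y = 0}. {x. \<epsilon> \<le> dist x y})"
      unfolding B_def by auto
    moreover have "closed \<dots>"
      by (intro closed_Int closed_INT ballI closed_Collect_le continuous_intros)
    ultimately show "closed B" by simp
  qed
  obtain t0 where t0: "t0 \<ge> 1" "\<forall>y. kuramoto_field E K w y = 0 \<longrightarrow> \<epsilon> \<le> dist (phi t0) y"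
    using freq[of 1] by blast
  have Bne: "B \<noteq> {}" using inB[of t0] t0 by auto
  obtain x0 where x0: "x0 \<in> B" "\<forall>x\<in>B. G x0 \<le> G x"
    using continuous_attains_inf[OF cB Bne G_cont] by blast
  define c where "c = G x0"
  have cpos: "c > 0"
  proof (rule ccontr)
    assume "\<not> c > 0"
    then have "G x0 = 0" using G_nonneg[of x0] unfolding c_def by linarith
    then have "\<forall>i. (F x0 i)^2 = 0" unfolding G_def by (subst (asm) sum_nonneg_eq_0_iff) auto
    then have "kuramoto_field E K w x0 = 0" unfolding F_def by (simp add: vec_eq_iff)
    then have "\<epsilon> \<le> dist x0 x0" using x0(1) unfolding B_def by blast
    then show False using eps by simp
  qed
  define \<delta> where "\<delta> = c / (2 * Lg)"
  have dpos: "\<delta> > 0" using cpos Lg_pos by (simp add: \<delta>_def)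
  have Ld: "Lg * \<delta> \<le> c / 2" using Lg_pos by (simp add: \<delta>_def)
  have grow: "\<exists>t\<ge>1. P (phi t) \<ge> P (phi 1) + real N * (\<delta> * (c / 2))" for N
  proof (induction N)
    case 0 then show ?case by auto
  next
    case (Suc N)
    then obtain t where t: "t \<ge> 1" "P (phi t) \<ge> P (phi 1) + real N * (\<delta> * (c / 2))" by blast
    obtain t' where t': "t' \<ge> t" "\<forall>y. kuramoto_field E K w y = 0 \<longrightarrow> \<epsilon> \<le> dist (phi t') y"
      using freq[of t] by blast
    have "phi t' \<in> B" using inB[of t'] t t' by auto
    then have "G (phi t') \<ge> c" using x0 unfolding c_def by blast
    then have "P (phi (t' + \<delta>)) \<ge> P (phi t') + \<delta> * (c / 2)"
      using P_step[of t' \<delta> c] t t' dpos Ld by auto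
    moreover have "P (phi t) \<le> P (phi t')" using P_mono[of t t'] t t' by auto
    ultimately have "P (phi (t' + \<delta>)) \<ge> P (phi 1) + real (Suc N) * (\<delta> * (c / 2))"
      using t by (simp add: algebra_simps add_divide_distrib)
    moreover have "t' + \<delta> \<ge> 1" using t t' dpos by auto
    ultimately show ?case by blast
  qed
  have ppos: "\<delta> * (c / 2) > 0" using dpos cpos by simp
  obtain N where N: "(Pmax - P (phi 1)) / (\<delta> * (c / 2)) < real N" using reals_Archimedean2 by blast
  then have "Pmax - P (phi 1) < real N * (\<delta> * (c / 2))" using ppos by (simp add: divide_less_eq)
  moreover obtain t where "t \<ge> 1" "P (phi t) \<ge> P (phi 1) + real N * (\<delta> * (c / 2))" using grow by blast
  moreover have "P (phi t) \<le> Pmax" using P_bound \<open>t \<ge> 1\<close> by simp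
  ultimately show False by linarith
qed

end

theorem theorem2:
  fixes E :: "'n::finite \<Rightarrow> 'n \<Rightarrow> bool"
    and K D :: real
    and w :: "real^'n"
    and phi :: "real \<Rightarrow> real^'n"
  assumes sym: "\<And>i j. E i j \<Longrightarrow> E j i"
    and irrefl: "\<And>i. \<not> E i i"
    and conn: "graph_connected E"
    and Kpos: "K > 0"
    and wsum: "(\<Sum>i\<in>UNIV. w $ i) = 0"
    and ode: "\<And>t. t \<ge> 0 \<Longrightarrow>
       (phi has_vector_derivative kuramoto_field E K w (phi t)) (at t within {0..})"
    and init_sum: "(\<Sum>i\<in>UNIV. phi 0 $ i) = 0"
    and D0_pos: "0 < spread (phi 0)"
    and D0_le: "spread (phi 0) \<le> D"
    and D_lt: "D < pi"
    and E0_lt: "energy (phi 0) < D^2"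
    and K_ge_Kstar: "\<And>k l. k \<noteq> l \<Longrightarrow> feasible D (energy (phi 0)) k l \<noteq> {} \<Longrightarrow>
       K \<ge> Kstar_kl E w D (energy (phi 0)) k l"
    and K_ge2: "K \<ge> sigma w * D / (sqrt (energy (phi 0)) * Lconst E * sin D)"
  shows "(\<forall>t\<ge>0. spread (phi t) \<le> D) \<and>
         (\<forall>\<epsilon>>0. eventually (\<lambda>t. \<exists>y. kuramoto_field E K w y = 0 \<and> dist (phi t) y < \<epsilon>) at_top)"
proof -
  interpret k: kura E K D w phi by (unfold_locales; fact)
  show ?thesis using k.spread_le k.conv by blast
qed

end
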